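(* Let $(B_a)_{a\in A}$ be a polynomial and let $S:=\sum_{a\in A}\mathcal P(B_a)$. Suppose $(X,t)$ is an algebra for $(B_a)_{a\in A}$ satisfying all image preserving equations with variable set $S$, i.e. for all $a,c\in A$, all $l:B_a\to S$, $r:B_c\to S$ with equal images, and all $k:S\to X$, one has $t(a,k\circ l)=t(c,k\circ r)$. Then there is a unique homomorphism (class function) $h:H((B_a)_{a\in A})\to X$, i.e. a unique class function with $h(\{f(b)\mid b\in B_a\})=t(a,h\circ f)$ for all $a\in A$ and $f:B_a\to H((B_a)_{a\in A})$.
   Context: Work in $\mathbf{ZF}$. A polynomial is a set $A$ with a family of sets $(B_a)_{a\in A}$. An algebra for it is a set $X$ with a function $t:\sum_{a\in A}X^{B_a}\to X$; a homomorphism $(X,s)\to(Y,t)$ is a (class) function $h$ with $h(s(a,f))=t(a,h\circ f)$ for all $a\in A$, $f:B_a\to X$; the same definitions apply to classes with class functions. A set $X$ is small relative to $(B_a)_{a\in A}$ if there are $a\in A$ and a surjection $B_a\to X$; it is hereditarily small if it is small and all its elements are hereditarily small. $H((B_a)_{a\in A})$ is the class of hereditarily small sets, with algebra structure $s(a,f):=\{f(b)\mid b\in B_a\}$. *)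

theory Defs
  imports "HOL-Library.FuncSet"
begin

text \<open>ZF sets are modelled by an abstract universe: a type 'v with a membership
relation mem (mem z y means z is an element of y), assumed extensional and
well-founded, and closed under images of the arities B a (replacement).\<close>

definition small :: "'a set \<Rightarrow> ('a \<Rightarrow> 'b set) \<Rightarrow> ('v \<Rightarrow> 'v \<Rightarrow> bool) \<Rightarrow> 'v \<Rightarrow> bool" where
  "small A B mem x \<longleftrightarrow> (\<exists>a\<in>A. \<exists>g. g ` B a = {z. mem z x})"

definition hsmall :: "'a set \<Rightarrow> ('a \<Rightarrow> 'b set) \<Rightarrow> ('v \<Rightarrow> 'v \<Rightarrow> bool) \<Rightarrow> 'v \<Rightarrow> bool" where
  "hsmall A B mem x \<longleftrightarrow> (\<forall>y. mem\<^sup>*\<^sup>* y x \<longrightarrow> small A B mem y)"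

definition sH :: "('a \<Rightarrow> 'b set) \<Rightarrow> ('v \<Rightarrow> 'v \<Rightarrow> bool) \<Rightarrow> 'a \<Rightarrow> ('b \<Rightarrow> 'v) \<Rightarrow> 'v" where
  "sH B mem a f = (THE y. \<forall>z. mem z y \<longleftrightarrow> z \<in> f ` B a)"

definition is_algebra :: "'a set \<Rightarrow> ('a \<Rightarrow> 'b set) \<Rightarrow> 'x set \<Rightarrow> ('a \<Rightarrow> ('b \<Rightarrow> 'x) \<Rightarrow> 'x) \<Rightarrow> bool" where
  "is_algebra A B X t \<longleftrightarrow> (\<forall>a\<in>A. \<forall>k\<in>B a \<rightarrow>\<^sub>E X. t a k \<in> X)"

definition Svars :: "'a set \<Rightarrow> ('a \<Rightarrow> 'b set) \<Rightarrow> ('a \<times> 'b set) set" where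
  "Svars A B = Sigma A (\<lambda>a. Pow (B a))"

definition satisfies_image_preserving :: "'a set \<Rightarrow> ('a \<Rightarrow> 'b set) \<Rightarrow> 'x set \<Rightarrow> ('a \<Rightarrow> ('b \<Rightarrow> 'x) \<Rightarrow> 'x) \<Rightarrow> bool" where
  "satisfies_image_preserving A B X t \<longleftrightarrow>
     (\<forall>a\<in>A. \<forall>c\<in>A. \<forall>l\<in>B a \<rightarrow> Svars A B. \<forall>r\<in>B c \<rightarrow> Svars A B. \<forall>k\<in>Svars A B \<rightarrow> X.
        l ` B a = r ` B c \<longrightarrow>
        t a (\<lambda>b\<in>B a. k (l b)) = t c (\<lambda>b\<in>B c. k (r b)))"

definition is_H_hom :: "'a set \<Rightarrow> ('a \<Rightarrow> 'b set) \<Rightarrow> ('v \<Rightarrow> 'v \<Rightarrow> bool) \<Rightarrow> 'x set \<Rightarrow> ('a \<Rightarrow> ('b \<Rightarrow> 'x) \<Rightarrow> 'x) \<Rightarrow> ('v \<Rightarrow> 'x) \<Rightarrow> bool" where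
  "is_H_hom A B mem X t h \<longleftrightarrow>
     (\<forall>x. hsmall A B mem x \<longrightarrow> h x \<in> X) \<and>
     (\<forall>a\<in>A. \<forall>f. f ` B a \<subseteq> {x. hsmall A B mem x} \<longrightarrow>
        h (sH B mem a f) = t a (\<lambda>b\<in>B a. h (f b)))"

end

theory Submission
  imports Defs
begin

lemma wd_lemma:
  assumes alg: "is_algebra A B X t"
    and eqns: "satisfies_image_preserving A B X t"
    and aA: "a \<in> A" and cA: "c \<in> A"
    and img: "f ` B a = g ` B c"
    and hX: "\<And>b. b \<in> B a \<Longrightarrow> h (f b) \<in> X"
  shows "t a (\<lambda>b\<in>B a. h (f b)) = t c (\<lambda>b\<in>B c. h (g b))"
proof -
  define e where "e = (\<lambda>y. (a, {b\<in>B a. f b = y}))"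
  define Y where "Y = f ` B a"
  have inj: "inj_on e Y"
  proof (rule inj_onI)
    fix y1 y2 assume "y1 \<in> Y" "y2 \<in> Y" "e y1 = e y2"
    then obtain b1 where "b1 \<in> B a" "f b1 = y1" unfolding Y_def by auto
    with \<open>e y1 = e y2\<close> have "b1 \<in> {b\<in>B a. f b = y2}" unfolding e_def by auto
    then show "y1 = y2" using \<open>f b1 = y1\<close> by auto
  qed
  have x0: "t a (\<lambda>b\<in>B a. h (f b)) \<in> X"
    using alg aA hX unfolding is_algebra_def by auto
  define k where "k = (\<lambda>s. if s \<in> e ` Y then h (inv_into Y e s) else t a (\<lambda>b\<in>B a. h (f b)))"
  have hY: "\<And>y. y \<in> Y \<Longrightarrow> h y \<in> X" using hX unfolding Y_def by auto
  have kX: "k \<in> Svars A B \<rightarrow> X"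
    unfolding k_def using x0 hY inv_into_into[of _ e Y] by (auto simp: Pi_def)
  have ke: "\<And>y. y \<in> Y \<Longrightarrow> k (e y) = h y"
    unfolding k_def using inj by auto
  have eS: "\<And>y. e y \<in> Svars A B" unfolding e_def Svars_def using aA by auto
  have l: "(\<lambda>b. e (f b)) \<in> B a \<rightarrow> Svars A B" using eS by auto
  have r: "(\<lambda>b. e (g b)) \<in> B c \<rightarrow> Svars A B" using eS by auto
  have im: "(\<lambda>b. e (f b)) ` B a = (\<lambda>b. e (g b)) ` B c"
    using img by (metis image_image)
  have "t a (\<lambda>b\<in>B a. k (e (f b))) = t c (\<lambda>b\<in>B c. k (e (g b)))"
    using eqns aA cA l r kX im unfolding satisfies_image_preserving_def by blast
  moreover have "(\<lambda>b\<in>B a. k (e (f b))) = (\<lambda>b\<in>B a. h (f b))"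
    using ke unfolding Y_def by (intro restrict_ext) auto
  moreover have "(\<lambda>b\<in>B c. k (e (g b))) = (\<lambda>b\<in>B c. h (g b))"
    using ke img unfolding Y_def by (intro restrict_ext) (metis imageI)
  ultimately show ?thesis by simp
qed

theorem mainTheorem3:
  fixes A :: "'a set" and B :: "'a \<Rightarrow> 'b set"
    and mem :: "'v \<Rightarrow> 'v \<Rightarrow> bool"
    and X :: "'x set" and t :: "'a \<Rightarrow> ('b \<Rightarrow> 'x) \<Rightarrow> 'x"
  assumes extensional: "\<And>x y. (\<forall>z. mem z x \<longleftrightarrow> mem z y) \<Longrightarrow> x = y"
    and foundation: "wfP mem"
    and replacement: "\<And>a f. a \<in> A \<Longrightarrow> \<exists>y. \<forall>z. mem z y \<longleftrightarrow> z \<in> f ` B a"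
    and alg: "is_algebra A B X t"
    and eqns: "satisfies_image_preserving A B X t"
  shows "\<exists>h. is_H_hom A B mem X t h \<and>
           (\<forall>h'. is_H_hom A B mem X t h' \<longrightarrow> (\<forall>x. hsmall A B mem x \<longrightarrow> h' x = h x))"
proof -
  define R where "R = {(y, x). mem y x}"
  have wfR: "wf R" using foundation unfolding R_def wfp_def .
  define rep where "rep = (\<lambda>x. SOME p. fst p \<in> A \<and> snd p ` B (fst p) = {z. mem z x})"
  have rep: "fst (rep x) \<in> A \<and> snd (rep x) ` B (fst (rep x)) = {z. mem z x}" if "small A B mem x" for x
  proof -
    from that obtain a g where "a \<in> A" "g ` B a = {z. mem z x}" unfolding small_def by blast
    then have "\<exists>p. fst p \<in> A \<and> snd p ` B (fst p) = {z. mem z x}" by (intro exI[of _ "(a,g)"]) auto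
    then show ?thesis unfolding rep_def by (rule someI_ex)
  qed
  define F where "F = (\<lambda>hh x. t (fst (rep x)) (\<lambda>b\<in>B (fst (rep x)). hh (snd (rep x) b)))"
  define h where "h = wfrec R F"
  have hrec: "h x = t (fst (rep x)) (\<lambda>b\<in>B (fst (rep x)). h (snd (rep x) b))" if "small A B mem x" for x
  proof -
    have "h x = F (cut h R x) x" unfolding h_def by (rule wfrec[OF wfR])
    also have "\<dots> = t (fst (rep x)) (\<lambda>b\<in>B (fst (rep x)). h (snd (rep x) b))"
      unfolding F_def
    proof (intro arg_cong[where f="t _"] restrict_ext)
      fix b assume "b \<in> B (fst (rep x))"
      then have "mem (snd (rep x) b) x" using rep[OF that] by blast
      then show "cut h R x (snd (rep x) b) = h (snd (rep x) b)" by (simp add: cut_apply R_def)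
    qed
    finally show ?thesis .
  qed
  have hs_small: "hsmall A B mem x \<Longrightarrow> small A B mem x" for x unfolding hsmall_def by blast
  have hs_mem: "hsmall A B mem x \<Longrightarrow> mem y x \<Longrightarrow> hsmall A B mem y" for x y
    unfolding hsmall_def by (meson rtranclp.rtrancl_into_rtrancl)
  have hX: "hsmall A B mem x \<Longrightarrow> h x \<in> X" for x
  proof (induction x rule: wfp_induct_rule[OF foundation])
    case (1 x)
    have s: "small A B mem x" using hs_small[OF 1(2)] .
    note rx = rep[OF s]
    have "(\<lambda>b\<in>B (fst (rep x)). h (snd (rep x) b)) \<in> B (fst (rep x)) \<rightarrow>\<^sub>E X"
    proof
      fix b assume "b \<in> B (fst (rep x))"
      then have "mem (snd (rep x) b) x" using rx by blast
      then show "(\<lambda>b\<in>B (fst (rep x)). h (snd (rep x) b)) b \<in> X"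
        using 1 hs_mem \<open>b \<in> B (fst (rep x))\<close> by auto
    qed auto
    then show ?case using hrec[OF s] alg rx unfolding is_algebra_def by auto
  qed
  have sH_mem: "mem z (sH B mem a f) \<longleftrightarrow> z \<in> f ` B a" if aA0: "a \<in> A" for a f z
  proof -
    obtain y where y: "\<forall>z. mem z y \<longleftrightarrow> z \<in> f ` B a" using replacement[OF aA0] by blast
    have "sH B mem a f = y" unfolding sH_def
      by (rule the_equality) (use y extensional in auto)
    then show ?thesis using y by simp
  qed
  have hom: "is_H_hom A B mem X t h"
    unfolding is_H_hom_def
  proof (intro conjI allI impI ballI)
    fix x assume "hsmall A B mem x" then show "h x \<in> X" by (rule hX)
  next
    fix a f assume aA: "a \<in> A" and fs: "f ` B a \<subseteq> {x. hsmall A B mem x}"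
    let ?x = "sH B mem a f"
    have el: "{z. mem z ?x} = f ` B a" using sH_mem[OF aA] by auto
    have s: "small A B mem ?x" unfolding small_def using aA el by blast
    note rx = rep[OF s]
    show "h ?x = t a (\<lambda>b\<in>B a. h (f b))"
      unfolding hrec[OF s]
    proof (rule wd_lemma[OF alg eqns, where h=h and f="snd (rep ?x)" and g=f])
      show "fst (rep ?x) \<in> A" using rx by blast
      show "a \<in> A" by fact
      show "snd (rep ?x) ` B (fst (rep ?x)) = f ` B a" using conjunct2[OF rx] el by (rule trans)
      fix b assume "b \<in> B (fst (rep ?x))"
      then have "snd (rep ?x) b \<in> f ` B a" using rx el by blast
      then show "h (snd (rep ?x) b) \<in> X" using fs hX by blast
    qed
  qed
  have uniq: "\<forall>x. hsmall A B mem x \<longrightarrow> h' x = h x" if h': "is_H_hom A B mem X t h'" for h'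
  proof (intro allI impI)
    fix x show "hsmall A B mem x \<Longrightarrow> h' x = h x"
    proof (induction x rule: wfp_induct_rule[OF foundation])
      case (1 x)
      obtain a g where aA: "a \<in> A" and g: "g ` B a = {z. mem z x}"
        using hs_small[OF 1(2)] unfolding small_def by blast
      have gs: "g ` B a \<subseteq> {x. hsmall A B mem x}" using g 1(2) hs_mem by auto
      have xe: "sH B mem a g = x"
        by (rule extensional) (use sH_mem[OF aA] g in auto)
      have "h' x = t a (\<lambda>b\<in>B a. h' (g b))"
        using h' aA gs xe unfolding is_H_hom_def by metis
      also have "(\<lambda>b\<in>B a. h' (g b)) = (\<lambda>b\<in>B a. h (g b))"
      proof (rule restrict_ext)
        fix b assume "b \<in> B a"
        then have "mem (g b) x" using g by blast
        then show "h' (g b) = h (g b)" using 1 gs \<open>b \<in> B a\<close> by blast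
      qed
      also have "t a \<dots> = h x"
        using hom aA gs xe unfolding is_H_hom_def by metis
      finally show ?case .
    qed
  qed
  show ?thesis using hom uniq by blast
qed

end
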